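(* Let $w=(i,\epsilon)\in\mathcal W_0(d)$ and $\tau=\tau(w)$. Then $d$ is even and: (1) $\mathrm{NF}(w)=(x_{j(1)},\dots,x_{j(d/2)},x_{j(d/2)}^{-1},\dots,x_{j(1)}^{-1})$ for some $j:[d/2]\to\mathbb N_0$ with $j(l)+p-1\ge j(l+1)$ for $1\le l\le d/2-1$, and $-d(p-1)/2\le j(l)-i(\tau^{-1}(l))\le d(p-1)/2$ for all $l\in[d/2]$; (2) for every $k\in[d/2]$, $|i(\tau^{-1}(k))-i(\tau^{-1}(d-k+1))|\le d(p-1)$.
   Context: Fix an integer $p\ge2$; $F_p=\langle x_0,x_1,\dots\mid x_nx_k=x_kx_{n+p-1}\ \forall k<n\rangle$ with identity $e$. For $d\in\mathbb N$ and $[d]=\{1,\dots,d\}$, a word of length $d$ is a tuple $w=(x_{i(1)}^{\epsilon(1)},\dots,x_{i(d)}^{\epsilon(d)})$ with $i:[d]\to\mathbb N_0$, $\epsilon:[d]\to\{1,-1\}$, written $w=(i,\epsilon)$; $\mathrm{eval}(w)=x_{i(1)}^{\epsilon(1)}\cdots x_{i(d)}^{\epsilon(d)}$; $\mathcal W(d)$ is the set of words of length $d$ and $\mathcal W_0(d)=\{w\in\mathcal W(d):\mathrm{eval}(w)=e\}$. Rewriting relations: ($\rightsquigarrow$) a consecutive pair $(x_a^{-1},x_b)$ is replaced by $(x_b,x_{a+p-1}^{-1})$ if $a>b$, by $(x_{b+p-1},x_a^{-1})$ if $a<b$, by $(x_b,x_a^{-1})$ if $a=b$; ($\rightarrowtail$,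 on $\rightsquigarrow$-irreducible words) $(x_a,x_b)$ with $b-p+1>a$ is replaced by $(x_{b-p+1},x_a)$, and $(x_a^{-1},x_b^{-1})$ with $a-p+1>b$ by $(x_b^{-1},x_{a-p+1}^{-1})$. The normal form $\mathrm{NF}(w)$ is obtained by applying $\rightsquigarrow$ until irreducible and then $\rightarrowtail$ until irreducible (well defined). Each step swaps two adjacent letters; $\tau(w)\in S_d$ is defined by letting $\tau(w)(l)$ be the position in $\mathrm{NF}(w)$ of the letter originating from the $l$-th letter of $w$. *)

theory Defs
  imports Main
begin

(* A letter x_a^e of F_p is a pair (a, e) with a :: nat and e :: int in {1, -1}. *)
type_synonym letter = "nat \<times> int"

(* Equality in the presented group
   F_p = < x_0, x_1, ... | x_n x_k = x_k x_(n+p-1) for all k < n >: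
   the congruence on words generated by free cancellation and the defining relations. *)
inductive fp_equiv :: "nat \<Rightarrow> letter list \<Rightarrow> letter list \<Rightarrow> bool" for p where
  fp_refl: "fp_equiv p u u"
| fp_sym: "fp_equiv p u v \<Longrightarrow> fp_equiv p v u"
| fp_trans: "fp_equiv p u v \<Longrightarrow> fp_equiv p v w \<Longrightarrow> fp_equiv p u w"
| fp_cancel: "e \<in> {1, -1} \<Longrightarrow> fp_equiv p (u @ [(a, e), (a, - e)] @ v) (u @ v)"
| fp_rel: "k < n \<Longrightarrow>
    fp_equiv p (u @ [(n, 1), (k, 1)] @ v) (u @ [(k, 1), (n + p - 1, 1)] @ v)"

definition word :: "nat \<Rightarrow> (nat \<Rightarrow> nat) \<Rightarrow> (nat \<Rightarrow> int) \<Rightarrow> letter list" where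
  "word d i eps = map (\<lambda>l. (i l, eps l)) [1..<d+1]"

definition in_W0 :: "nat \<Rightarrow> nat \<Rightarrow> (nat \<Rightarrow> nat) \<Rightarrow> (nat \<Rightarrow> int) \<Rightarrow> bool" where
  "in_W0 p d i eps \<longleftrightarrow> (\<forall>l\<in>{1..d}. eps l \<in> {1, -1}) \<and> fp_equiv p (word d i eps) []"

(* Tracked letters (a, e, r): letter x_a^e originating from position o of the original word *)
type_synonym tletter = "nat \<times> int \<times> nat"

definition tracked_word :: "nat \<Rightarrow> (nat \<Rightarrow> nat) \<Rightarrow> (nat \<Rightarrow> int) \<Rightarrow> tletter list" where
  "tracked_word d i eps = map (\<lambda>l. (i l, eps l, l)) [1..<d+1]"

definition strip :: "tletter list \<Rightarrow> letter list" where
  "strip u = map (\<lambda>(a, e, r). (a, e)) u"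

inductive rs_step :: "nat \<Rightarrow> tletter list \<Rightarrow> tletter list \<Rightarrow> bool" for p where
  rs_gt: "a > b \<Longrightarrow> rs_step p (xs @ [(a, -1, r1), (b, 1, r2)] @ ys)
                              (xs @ [(b, 1, r2), (a + p - 1, -1, r1)] @ ys)"
| rs_lt: "a < b \<Longrightarrow> rs_step p (xs @ [(a, -1, r1), (b, 1, r2)] @ ys)
                              (xs @ [(b + p - 1, 1, r2), (a, -1, r1)] @ ys)"
| rs_eq: "a = b \<Longrightarrow> rs_step p (xs @ [(a, -1, r1), (b, 1, r2)] @ ys)
                              (xs @ [(b, 1, r2), (a, -1, r1)] @ ys)"

definition rs_irreducible :: "nat \<Rightarrow> tletter list \<Rightarrow> bool" where
  "rs_irreducible p u \<longleftrightarrow> \<not> (\<exists>v. rs_step p u v)"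

inductive ra_step :: "nat \<Rightarrow> tletter list \<Rightarrow> tletter list \<Rightarrow> bool" for p where
  ra_pos: "rs_irreducible p (xs @ [(a, 1, r1), (b, 1, r2)] @ ys) \<Longrightarrow>
           int b - int p + 1 > int a \<Longrightarrow>
           ra_step p (xs @ [(a, 1, r1), (b, 1, r2)] @ ys)
                     (xs @ [(b - p + 1, 1, r2), (a, 1, r1)] @ ys)"
| ra_neg: "rs_irreducible p (xs @ [(a, -1, r1), (b, -1, r2)] @ ys) \<Longrightarrow>
           int a - int p + 1 > int b \<Longrightarrow>
           ra_step p (xs @ [(a, -1, r1), (b, -1, r2)] @ ys)
                     (xs @ [(b, -1, r2), (a - p + 1, -1, r1)] @ ys)"

definition ra_irreducible :: "nat \<Rightarrow> tletter list \<Rightarrow> bool" where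
  "ra_irreducible p u \<longleftrightarrow> \<not> (\<exists>v. ra_step p u v)"

definition NF_tracked :: "nat \<Rightarrow> tletter list \<Rightarrow> tletter list \<Rightarrow> bool" where
  "NF_tracked p w v \<longleftrightarrow> (\<exists>u. (rs_step p)\<^sup>*\<^sup>* w u \<and> rs_irreducible p u \<and>
                              (ra_step p)\<^sup>*\<^sup>* u v \<and> ra_irreducible p v)"

(* \<tau>^{-1}(k): the original position of the letter at position k (1-based) of the tracked NF *)
definition tau_inv :: "tletter list \<Rightarrow> nat \<Rightarrow> nat" where
  "tau_inv v k = snd (snd (v ! (k - 1)))"

end

theory Submission
  imports Defs
begin


definition base :: "nat \<Rightarrow> nat \<Rightarrow> (nat \<Rightarrow> nat) \<Rightarrow> (nat \<Rightarrow> nat)" where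
 "base p r s = (if s 0 < r then s
   else if s 0 = r then
     (if r + min (s 1) (p-1) < p - 1 then case_nat (r + min (s 1) (p-1)) (\<lambda>n. s (Suc (Suc n)))
      else case_nat (p-1) (case_nat (r + min (s 1) (p-1) - (p-1)) (\<lambda>n. s (Suc (Suc n)))))
   else case_nat (p-1) s)"

definition binv :: "nat \<Rightarrow> nat \<Rightarrow> (nat \<Rightarrow> nat) \<Rightarrow> (nat \<Rightarrow> nat)" where
 "binv p r s = (if s 0 < r then s
   else if s 0 < p - 1 then case_nat r (case_nat (s 0 - r) (\<lambda>n. s (Suc n)))
   else if s 1 \<le> r then case_nat r (case_nat (s 1 + (p-1) - r) (\<lambda>n. s (Suc (Suc n))))
   else (\<lambda>n. s (Suc n)))"

definition VV :: "nat \<Rightarrow> (nat \<Rightarrow> nat) set" where "VV p = {s. \<forall>n. s n < p}"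

lemma base_binv: assumes "r < p - 1" "s \<in> VV p" shows "base p r (binv p r s) = s"
proof -
  have a: "s 0 < p" "s (Suc 0) < p" using assms(2) by (auto simp: VV_def)
  show ?thesis unfolding base_def binv_def
    apply (rule ext) subgoal for n using a assms(1)
    by (cases n; cases "n - 1"; auto split: nat.splits) done
qed

lemma binv_base: assumes "r < p - 1" "s \<in> VV p" shows "binv p r (base p r s) = s"
proof -
  have a: "s 0 < p" "s (Suc 0) < p" using assms(2) by (auto simp: VV_def)
  show ?thesis unfolding base_def binv_def
    apply (rule ext) subgoal for n using a assms(1)
    by (cases n; cases "n - 1"; auto split: nat.splits) done
qed

lemma base_VV: "r < p - 1 \<Longrightarrow> s \<in> VV p \<Longrightarrow> base p r s \<in> VV p"
  unfolding VV_def base_def by (auto split: nat.splits)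

lemma binv_VV: "r < p - 1 \<Longrightarrow> s \<in> VV p \<Longrightarrow> binv p r s \<in> VV p"
  unfolding VV_def binv_def by (auto split: nat.splits)

fun Xq :: "nat \<Rightarrow> nat \<Rightarrow> nat \<Rightarrow> (nat \<Rightarrow> nat) \<Rightarrow> (nat \<Rightarrow> nat)" where
  "Xq p 0 r s = base p r s"
| "Xq p (Suc q) r s = (if s 0 = p - 1 then case_nat (p-1) (Xq p q r (\<lambda>n. s (Suc n))) else s)"

fun Yq :: "nat \<Rightarrow> nat \<Rightarrow> nat \<Rightarrow> (nat \<Rightarrow> nat) \<Rightarrow> (nat \<Rightarrow> nat)" where
  "Yq p 0 r s = binv p r s"
| "Yq p (Suc q) r s = (if s 0 = p - 1 then case_nat (p-1) (Yq p q r (\<lambda>n. s (Suc n))) else s)"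

definition XX :: "nat \<Rightarrow> nat \<Rightarrow> (nat \<Rightarrow> nat) \<Rightarrow> (nat \<Rightarrow> nat)" where
  "XX p n = Xq p (n div (p-1)) (n mod (p-1))"
definition YY :: "nat \<Rightarrow> nat \<Rightarrow> (nat \<Rightarrow> nat) \<Rightarrow> (nat \<Rightarrow> nat)" where
  "YY p n = Yq p (n div (p-1)) (n mod (p-1))"

lemma divmod_step: assumes "p \<ge> 2" "\<not> n < p - 1"
  shows "n div (p-1) = Suc ((n - (p-1)) div (p-1))" "n mod (p-1) = (n - (p-1)) mod (p-1)"
proof -
  have e: "n = (n - (p-1)) + (p-1)" using assms by simp
  have nz: "p - 1 \<noteq> 0" using assms by simp
  have "n div (p-1) = ((n - (p-1)) + (p-1)) div (p-1)" using e by simp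
  also have "\<dots> = Suc ((n - (p-1)) div (p-1))" using div_add_self2[OF nz, of "n - (p-1)"] by simp
  finally show "n div (p-1) = Suc ((n - (p-1)) div (p-1))" .
  have "n mod (p-1) = ((n - (p-1)) + (p-1)) mod (p-1)" using e by simp
  also have "\<dots> = (n - (p-1)) mod (p-1)" by simp
  finally show "n mod (p-1) = (n - (p-1)) mod (p-1)" .
qed

lemma XX_rec: "p \<ge> 2 \<Longrightarrow> XX p n s = (if n < p - 1 then base p n s
   else if s 0 = p - 1 then case_nat (p-1) (XX p (n - (p-1)) (\<lambda>n. s (Suc n))) else s)"
  unfolding XX_def using divmod_step[of p n] by auto

lemma YY_rec: "p \<ge> 2 \<Longrightarrow> YY p n s = (if n < p - 1 then binv p n s
   else if s 0 = p - 1 then case_nat (p-1) (YY p (n - (p-1)) (\<lambda>n. s (Suc n))) else s)"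
  unfolding YY_def using divmod_step[of p n] by auto

lemma XX_big: "p \<ge> 2 \<Longrightarrow> XX p (n + (p-1)) s = (if s 0 = p - 1 then case_nat (p-1) (XX p n (\<lambda>n. s (Suc n))) else s)"
  by (subst XX_rec) auto

lemma YY_big: "p \<ge> 2 \<Longrightarrow> YY p (n + (p-1)) s = (if s 0 = p - 1 then case_nat (p-1) (YY p n (\<lambda>n. s (Suc n))) else s)"
  by (subst YY_rec) auto

lemma base_low: "s 0 < r \<Longrightarrow> base p r s = s" by (simp add: base_def)

lemma XX_F1: assumes "p \<ge> 2" "k < p - 1" "k < n" "s 0 \<le> k" shows "XX p n s = s"
  using assms by (subst XX_rec) (auto simp: base_def)

lemma XX_F2: assumes "p \<ge> 2" "k < p - 1" "k < n" "s 0 > k" shows "(XX p n s) 0 > k"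
  using assms by (subst XX_rec) (auto simp: base_def)

lemma XX_rel: assumes "p \<ge> 2" "k < n"
  shows "XX p k (XX p n s) = XX p (n + (p-1)) (XX p k s)"
  using assms(2)
proof (induction k arbitrary: n s rule: less_induct)
  case (less k)
  show ?case
  proof (cases "k < p - 1")
    case True
    have Xk: "\<And>t. XX p k t = base p k t" using True assms(1) by (subst XX_rec) auto
    consider "s 0 < k" | "s 0 = k" | "s 0 > k" by linarith
    then show ?thesis
    proof cases
      case 1
      have "XX p n s = s" using XX_F1[OF assms(1) True less.prems] 1 by simp
      moreover have "base p k s = s" using 1 by (simp add: base_def)
      moreover have "XX p (n + (p-1)) s = s" using 1 True assms(1) XX_big by simp
      ultimately show ?thesis by (simp add: Xk)
    next
      case 2
      have "XX p n s = s" using XX_F1[OF assms(1) True less.prems] 2 by simp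
      moreover have "XX p (n + (p-1)) (base p k s) = base p k s"
      proof -
        let ?t = "min (s 1) (p-1)"
        show ?thesis
        proof (cases "k + ?t < p - 1")
          case True
          have b: "base p k s = case_nat (k + ?t) (\<lambda>n. s (Suc (Suc n)))" using 2 True unfolding base_def by (simp only: if_True if_False less_irrefl refl)
          show ?thesis unfolding b by (subst XX_big[OF assms(1)]) (use True in \<open>auto simp: min_def split: if_splits\<close>)
        next
          case False
          let ?d = "k + ?t - (p-1)"
          have "?d \<le> k" by linarith
          then have "XX p n (case_nat ?d (\<lambda>n. s (Suc (Suc n)))) = case_nat ?d (\<lambda>n. s (Suc (Suc n)))"
            using XX_F1[OF assms(1) \<open>k < p - 1\<close> less.prems] by simp
          moreover have b: "base p k s = case_nat (p-1) (case_nat ?d (\<lambda>n. s (Suc (Suc n))))" using 2 False unfolding base_def by (simp only: if_True if_False less_irrefl refl)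
          ultimately show ?thesis unfolding b by (subst XX_big[OF assms(1)]) simp
        qed
      qed
      ultimately show ?thesis by (simp add: Xk)
    next
      case 3
      have bk: "base p k s = case_nat (p-1) s" using 3 by (simp add: base_def)
      have "(XX p n s) 0 > k" using XX_F2[of p k n s] assms(1) True less.prems 3 by simp
      then have "base p k (XX p n s) = case_nat (p-1) (XX p n s)" by (simp add: base_def)
      moreover have "XX p (n + (p-1)) (case_nat (p-1) s) = case_nat (p-1) (XX p n s)"
        by (subst XX_big[OF assms(1)]) simp
      ultimately show ?thesis by (simp add: Xk bk)
    qed
  next
    case False
    define k' where "k' = k - (p-1)"
    define n' where "n' = n - (p-1)"
    have k: "k = k' + (p-1)" and n: "n = n' + (p-1)" using False less.prems unfolding k'_def n'_def by auto
    have lt: "k' < n'" "k' < k" using k n less.prems assms(1) by auto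
    show ?thesis
    proof (cases "s 0 = p - 1")
      case True
      have IH: "XX p k' (XX p n' (\<lambda>n. s (Suc n))) = XX p (n' + (p-1)) (XX p k' (\<lambda>n. s (Suc n)))"
        using less.IH[OF lt(2) lt(1)] .
      have A: "XX p n s = case_nat (p-1) (XX p n' (\<lambda>n. s (Suc n)))"
        unfolding n by (subst XX_big[OF assms(1)]) (use True in simp)
      have B: "XX p k s = case_nat (p-1) (XX p k' (\<lambda>n. s (Suc n)))"
        unfolding k by (subst XX_big[OF assms(1)]) (use True in simp)
      have L: "XX p k (XX p n s) = case_nat (p-1) (XX p k' (XX p n' (\<lambda>n. s (Suc n))))"
        unfolding A unfolding k by (subst XX_big[OF assms(1)]) simp
      have R: "XX p (n + (p-1)) (XX p k s) = case_nat (p-1) (XX p (n' + (p-1)) (XX p k' (\<lambda>n. s (Suc n))))"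
        unfolding B unfolding n by (subst XX_big[OF assms(1)]) simp
      show ?thesis unfolding L R IH ..
    next
      case False
      have "XX p n s = s" unfolding n by (subst XX_big[OF assms(1)]) (use False in simp)
      moreover have "XX p k s = s" unfolding k by (subst XX_big[OF assms(1)]) (use False in simp)
      moreover have "XX p (n + (p-1)) s = s" by (subst XX_big[OF assms(1)]) (use False in simp)
      ultimately show ?thesis by simp
    qed
  qed
qed

lemma stl_VV: "s \<in> VV p \<Longrightarrow> (\<lambda>n. s (Suc n)) \<in> VV p" by (simp add: VV_def)
lemma cons_VV: "s \<in> VV p \<Longrightarrow> c < p \<Longrightarrow> case_nat c s \<in> VV p" by (auto simp: VV_def split: nat.splits)
lemma case_stl: "s 0 = c \<Longrightarrow> case_nat c (\<lambda>n. s (Suc n)) = s"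
  by (rule ext) (auto split: nat.splits)

lemma XX_VV: assumes "p \<ge> 2" shows "s \<in> VV p \<Longrightarrow> XX p n s \<in> VV p"
proof (induction n arbitrary: s rule: less_induct)
  case (less n)
  show ?case
  proof (cases "n < p - 1")
    case True then show ?thesis using less.prems assms base_VV by (subst XX_rec) auto
  next
    case False
    have "XX p (n - (p-1)) (\<lambda>n. s (Suc n)) \<in> VV p"
      using less.IH[of "n - (p-1)"] less.prems stl_VV False assms by simp
    then show ?thesis using less.prems assms False cons_VV[of _ p "p-1"] by (subst XX_rec) auto
  qed
qed

lemma YY_VV: assumes "p \<ge> 2" shows "s \<in> VV p \<Longrightarrow> YY p n s \<in> VV p"
proof (induction n arbitrary: s rule: less_induct)
  case (less n)
  show ?case
  proof (cases "n < p - 1")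
    case True then show ?thesis using less.prems assms binv_VV by (subst YY_rec) auto
  next
    case False
    have "YY p (n - (p-1)) (\<lambda>n. s (Suc n)) \<in> VV p"
      using less.IH[of "n - (p-1)"] less.prems stl_VV False assms by simp
    then show ?thesis using less.prems assms False cons_VV[of _ p "p-1"] by (subst YY_rec) auto
  qed
qed

lemma YX: assumes "p \<ge> 2" shows "s \<in> VV p \<Longrightarrow> YY p n (XX p n s) = s"
proof (induction n arbitrary: s rule: less_induct)
  case (less n)
  show ?case
  proof (cases "n < p - 1")
    case True then show ?thesis using less.prems assms binv_base
      by (subst XX_rec, simp, subst YY_rec, simp_all)
  next
    case False
    show ?thesis
    proof (cases "s 0 = p - 1")
      case True
      have X: "XX p n s = case_nat (p-1) (XX p (n - (p-1)) (\<lambda>n. s (Suc n)))"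
        using True False assms by (subst XX_rec) auto
      have "YY p n (XX p n s) = case_nat (p-1) (YY p (n - (p-1)) (XX p (n - (p-1)) (\<lambda>n. s (Suc n))))"
        unfolding X using False assms by (subst YY_rec) auto
      also have "\<dots> = case_nat (p-1) (\<lambda>n. s (Suc n))"
        using less.IH[of "n - (p-1)"] less.prems stl_VV False assms by simp
      also have "\<dots> = s" using case_stl[of s "p-1"] True by simp
      finally show ?thesis .
    next
      case F2: False
      have X: "XX p n s = s" using F2 False assms by (subst XX_rec) auto
      show ?thesis unfolding X using F2 False assms by (subst YY_rec) auto
    qed
  qed
qed

lemma XY: assumes "p \<ge> 2" shows "s \<in> VV p \<Longrightarrow> XX p n (YY p n s) = s"
proof (induction n arbitrary: s rule: less_induct)
  case (less n)
  show ?case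
  proof (cases "n < p - 1")
    case True then show ?thesis using less.prems assms base_binv
      by (subst YY_rec, simp, subst XX_rec, simp_all)
  next
    case False
    show ?thesis
    proof (cases "s 0 = p - 1")
      case True
      have X: "YY p n s = case_nat (p-1) (YY p (n - (p-1)) (\<lambda>n. s (Suc n)))"
        using True False assms by (subst YY_rec) auto
      have "XX p n (YY p n s) = case_nat (p-1) (XX p (n - (p-1)) (YY p (n - (p-1)) (\<lambda>n. s (Suc n))))"
        unfolding X using False assms by (subst XX_rec) auto
      also have "\<dots> = case_nat (p-1) (\<lambda>n. s (Suc n))"
        using less.IH[of "n - (p-1)"] less.prems stl_VV False assms by simp
      also have "\<dots> = s" using case_stl[of s "p-1"] True by simp
      finally show ?thesis .
    next
      case F2: False
      have X: "YY p n s = s" using F2 False assms by (subst YY_rec) auto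
      show ?thesis unfolding X using F2 False assms by (subst XX_rec) auto
    qed
  qed
qed



fun act :: "nat \<Rightarrow> letter list \<Rightarrow> (nat \<Rightarrow> nat) \<Rightarrow> (nat \<Rightarrow> nat)" where
  "act p [] s = s"
| "act p (x # w) s = act p w (if snd x = 1 then XX p (fst x) s else YY p (fst x) s)"

lemma act_append: "act p (xs @ ys) s = act p ys (act p xs s)"
  by (induction xs arbitrary: s) auto

lemma act_VV: "p \<ge> 2 \<Longrightarrow> s \<in> VV p \<Longrightarrow> act p w s \<in> VV p"
  by (induction w arbitrary: s) (auto simp: XX_VV YY_VV)

lemma fp_act: assumes "p \<ge> 2" shows "fp_equiv p u v \<Longrightarrow> \<forall>s\<in>VV p. act p u s = act p v s"
proof (induction rule: fp_equiv.induct)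
  case (fp_cancel e u a v)
  show ?case
  proof
    fix s assume s: "s \<in> VV p"
    have s': "act p u s \<in> VV p" using act_VV[OF assms s] .
    have "act p [(a, e), (a, - e)] (act p u s) = act p u s"
      using fp_cancel YX[OF assms s'] XY[OF assms s'] by auto
    then show "act p (u @ [(a, e), (a, - e)] @ v) s = act p (u @ v) s"
      by (simp add: act_append)
  qed
next
  case (fp_rel k n u v)
  have e: "n + p - Suc 0 = n + (p - Suc 0)" using assms by simp
  show ?case using XX_rel[OF assms fp_rel] by (simp add: act_append e)
qed auto

lemma pair_rs_gt: assumes "p \<ge> 2" "b < a" "s \<in> VV p"
  shows "act p [(a,-1),(b,1)] s = act p [(b,1),(a+p-1,-1)] s"
proof -
  define t where "t = YY p a s"
  have t: "t \<in> VV p" "s = XX p a t" using YY_VV[OF assms(1) assms(3)] XY[OF assms(1) assms(3)] unfolding t_def by auto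
  have e: "a + p - 1 = a + (p - 1)" using assms by simp
  have "act p [(b,1),(a+p-1,-1)] s = YY p (a + (p-1)) (XX p b (XX p a t))" using t e by simp
  also have "\<dots> = YY p (a + (p-1)) (XX p (a + (p-1)) (XX p b t))" using XX_rel[OF assms(1) assms(2)] by simp
  also have "\<dots> = XX p b t" using YX[OF assms(1) XX_VV[OF assms(1) t(1)]] by simp
  finally show ?thesis using t_def by simp
qed

lemma pair_rs_lt: assumes "p \<ge> 2" "a < b" "s \<in> VV p"
  shows "act p [(a,-1),(b,1)] s = act p [(b+p-1,1),(a,-1)] s"
proof -
  define t where "t = YY p a s"
  have t: "t \<in> VV p" "s = XX p a t" using YY_VV[OF assms(1) assms(3)] XY[OF assms(1) assms(3)] unfolding t_def by auto
  have e: "b + p - 1 = b + (p - 1)" using assms by simp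
  have "act p [(b+p-1,1),(a,-1)] s = YY p a (XX p (b + (p-1)) (XX p a t))" using t e by simp
  also have "\<dots> = YY p a (XX p a (XX p b t))" using XX_rel[OF assms(1) assms(2)] by simp
  also have "\<dots> = XX p b t" using YX[OF assms(1) XX_VV[OF assms(1) t(1)]] by simp
  finally show ?thesis using t_def by simp
qed

lemma pair_rs_eq: assumes "p \<ge> 2" "s \<in> VV p"
  shows "act p [(a,-1),(a,1)] s = act p [(a,1),(a,-1)] s"
  using YX[OF assms] XY[OF assms] by simp

lemma pair_ra_pos: assumes "p \<ge> 2" "int b - int p + 1 > int a"
  shows "act p [(a,1),(b,1)] s = act p [(b-p+1,1),(a,1)] s"
proof -
  have lt: "a < b - p + 1" and e: "b - p + 1 + (p - 1) = b" using assms by auto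
  show ?thesis using XX_rel[OF assms(1) lt, of s] e by simp
qed

lemma pair_ra_neg: assumes "p \<ge> 2" "int a - int p + 1 > int b" "s \<in> VV p"
  shows "act p [(a,-1),(b,-1)] s = act p [(b,-1),(a-p+1,-1)] s"
proof -
  define n where "n = a - p + 1"
  have lt: "b < n" and e: "n + (p - 1) = a" using assms unfolding n_def by auto
  define z where "z = YY p n (YY p b s)"
  have zV: "z \<in> VV p" unfolding z_def using YY_VV[OF assms(1)] assms(3) by blast
  have bV: "YY p b s \<in> VV p" using YY_VV[OF assms(1) assms(3)] .
  have "XX p b (XX p n z) = s" unfolding z_def using XY[OF assms(1) bV] XY[OF assms(1) assms(3)] by simp
  then have "XX p a (XX p b z) = s" using XX_rel[OF assms(1) lt, of z] e by simp
  then have "YY p a s = XX p b z" using YX[OF assms(1) XX_VV[OF assms(1) zV]] by metis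
  then have "YY p b (YY p a s) = z" using YX[OF assms(1) zV] by simp
  then show ?thesis unfolding z_def n_def by simp
qed

lemma strip_app: "strip (xs @ ys) = strip xs @ strip ys" by (simp add: strip_def)

lemma rs_act: assumes "p \<ge> 2" "rs_step p u v" "s \<in> VV p"
  shows "act p (strip u) s = act p (strip v) s"
  using assms(2)
proof cases
  case (rs_gt b a xs r1 r2 ys)
  have V: "act p (strip xs) s \<in> VV p" using act_VV[OF assms(1) assms(3)] .
  show ?thesis using pair_rs_gt[OF assms(1) rs_gt(3) V] rs_gt by (simp add: strip_def act_append)
next
  case (rs_lt a b xs r1 r2 ys)
  have V: "act p (strip xs) s \<in> VV p" using act_VV[OF assms(1) assms(3)] .
  show ?thesis using pair_rs_lt[OF assms(1) rs_lt(3) V] rs_lt by (simp add: strip_def act_append)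
next
  case (rs_eq a b xs r1 r2 ys)
  have V: "act p (strip xs) s \<in> VV p" using act_VV[OF assms(1) assms(3)] .
  show ?thesis using pair_rs_eq[OF assms(1) V, of a] rs_eq by (simp add: strip_def act_append)
qed

lemma ra_act: assumes "p \<ge> 2" "ra_step p u v" "s \<in> VV p"
  shows "act p (strip u) s = act p (strip v) s"
  using assms(2)
proof cases
  case (ra_pos xs a r1 b r2 ys)
  show ?thesis using pair_ra_pos[OF assms(1) ra_pos(4)] ra_pos by (simp add: strip_def act_append)
next
  case (ra_neg xs a r1 b r2 ys)
  have V: "act p (strip xs) s \<in> VV p" using act_VV[OF assms(1) assms(3)] .
  show ?thesis using pair_ra_neg[OF assms(1) ra_neg(4) V] ra_neg by (simp add: strip_def act_append)
qed



fun actP :: "nat \<Rightarrow> nat list \<Rightarrow> (nat \<Rightarrow> nat) \<Rightarrow> (nat \<Rightarrow> nat)" where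
  "actP p [] s = s"
| "actP p (a # w) s = actP p w (XX p a s)"

fun actN :: "nat \<Rightarrow> nat list \<Rightarrow> (nat \<Rightarrow> nat) \<Rightarrow> (nat \<Rightarrow> nat)" where
  "actN p [] s = s"
| "actN p (a # w) s = actN p w (YY p a s)"

lemma actP_append: "actP p (xs @ ys) s = actP p ys (actP p xs s)"
  by (induction xs arbitrary: s) auto
lemma actN_append: "actN p (xs @ ys) s = actN p ys (actN p xs s)"
  by (induction xs arbitrary: s) auto

lemma act_pos: "act p (map (\<lambda>a. (a, 1)) W) s = actP p W s"
  by (induction W arbitrary: s) auto
lemma act_neg: "act p (map (\<lambda>a. (a, -1)) W) s = actN p W s"
  by (induction W arbitrary: s) auto

lemma actP_VV: "p \<ge> 2 \<Longrightarrow> s \<in> VV p \<Longrightarrow> actP p W s \<in> VV p"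
  by (induction W arbitrary: s) (auto simp: XX_VV)
lemma actN_VV: "p \<ge> 2 \<Longrightarrow> s \<in> VV p \<Longrightarrow> actN p W s \<in> VV p"
  by (induction W arbitrary: s) (auto simp: YY_VV)

lemma inv1: "p \<ge> 2 \<Longrightarrow> s \<in> VV p \<Longrightarrow> actN p (rev W) (actP p W s) = s"
proof (induction W arbitrary: s)
  case (Cons a W)
  have "actN p (rev W) (actP p W (XX p a s)) = XX p a s"
    using Cons XX_VV by blast
  then show ?case using YX[OF Cons.prems] by (simp add: actN_append)
qed simp

lemma inv2: "p \<ge> 2 \<Longrightarrow> s \<in> VV p \<Longrightarrow> actP p W (actN p (rev W) s) = s"
proof (induction W arbitrary: s rule: rev_induct)
  case (snoc a W)
  have "actP p W (actN p (rev W) (YY p a s)) = YY p a s"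
    using snoc YY_VV by blast
  then show ?case using XY[OF snoc.prems] by (simp add: actP_append)
qed simp

lemma peel: assumes "p \<ge> 2" "\<forall>a\<in>set A. mu < a"
  shows "actP p (A @ mu # B) s = actP p (map (\<lambda>a. a + (p-1)) A @ B) (XX p mu s)"
  using assms(2)
proof (induction A arbitrary: s)
  case (Cons a A)
  have "actP p (a # A @ mu # B) s = actP p (map (\<lambda>a. a + (p-1)) A @ B) (XX p mu (XX p a s))"
    using Cons by simp
  also have "XX p mu (XX p a s) = XX p (a + (p-1)) (XX p mu s)"
    using XX_rel[OF assms(1)] Cons.prems by simp
  finally show ?case by simp
qed simp

definition pt :: "nat \<Rightarrow> nat \<Rightarrow> nat \<Rightarrow> (nat \<Rightarrow> nat) \<Rightarrow> (nat \<Rightarrow> nat)" where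
  "pt p q r b = (\<lambda>n. if n < q then p - 1 else if n = q then r else b (n - Suc q))"

definition prep :: "nat \<Rightarrow> (nat \<Rightarrow> nat) \<Rightarrow> (nat \<Rightarrow> nat)" where
  "prep k b = (\<lambda>n. if n < k then 0 else b (n - k))"

lemma pt0: "pt p 0 r b = case_nat r b"
  by (rule ext) (auto simp: pt_def split: nat.splits)
lemma ptSuc: "pt p (Suc q) r b = case_nat (p-1) (pt p q r b)"
  by (rule ext) (auto simp: pt_def split: nat.splits)
lemma prep0: "prep 0 b = b" by (simp add: prep_def)
lemma prepSuc: "prep (Suc k) b = case_nat 0 (prep k b)"
  by (rule ext) (auto simp: prep_def split: nat.splits)

lemma X1: assumes "p \<ge> 2" "r < p - 1" shows "q * (p-1) + r < m \<Longrightarrow> XX p m (pt p q r b) = pt p q r b"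
proof (induction q arbitrary: m)
  case 0
  then show ?case using assms unfolding pt0 by (subst XX_rec) (auto simp: base_def)
next
  case (Suc q)
  have m: "\<not> m < p - 1" "q * (p-1) + r < m - (p-1)" using Suc.prems by auto
  have "XX p m (pt p (Suc q) r b) = case_nat (p-1) (XX p (m - (p-1)) (pt p q r b))"
    unfolding ptSuc using assms m by (subst XX_rec) auto
  then show ?case using Suc.IH[OF m(2)] ptSuc by simp
qed

lemma X2: assumes "p \<ge> 2" "r < p - 1" shows "XX p (q * (p-1) + r) (pt p q r (case_nat 0 g)) = pt p q r g"
proof (induction q)
  case 0
  have "base p r (case_nat r (case_nat 0 g)) = case_nat r g"
    using assms by (auto simp: base_def intro!: ext split: nat.splits)
  then show ?case using assms unfolding pt0 by (subst XX_rec) auto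
next
  case (Suc q)
  have m: "\<not> Suc q * (p-1) + r < p - 1" "Suc q * (p-1) + r - (p-1) = q * (p-1) + r" using assms by auto
  have "XX p (Suc q * (p-1) + r) (pt p (Suc q) r (case_nat 0 g)) = case_nat (p-1) (XX p (q * (p-1) + r) (pt p q r (case_nat 0 g)))"
    unfolding ptSuc using assms m by (subst XX_rec) auto
  then show ?case using Suc.IH ptSuc by simp
qed

lemma fixall: assumes "p \<ge> 2" "r < p - 1" "\<forall>a\<in>set W. q * (p-1) + r < a"
  shows "actP p W (pt p q r b) = pt p q r b"
  using assms(3) by (induction W) (auto simp: X1[OF assms(1,2)])

lemma DET: assumes "p \<ge> 2" "r < p - 1" "mu = q * (p-1) + r"
  shows "\<forall>a\<in>set W. mu \<le> a \<Longrightarrow> actP p W (pt p q r (prep (count_list W mu) b)) = pt p q r b"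
proof (induction "length W" arbitrary: W b rule: less_induct)
  case less
  show ?case
  proof (cases "mu \<in> set W")
    case False
    have "\<forall>a\<in>set W. q * (p-1) + r < a" using less.prems assms(3) False by (metis le_neq_implies_less)
    then show ?thesis using fixall[OF assms(1,2)] False by (simp add: prep0)
  next
    case True
    then obtain A B where W: "W = A @ mu # B" "mu \<notin> set A" by (meson split_list_first)
    have A: "\<forall>a\<in>set A. mu < a" using W less.prems by (metis Un_iff le_neq_implies_less set_append)
    define W1 where "W1 = map (\<lambda>a. a + (p-1)) A @ B"
    have c1: "count_list (map (\<lambda>a. a + (p-1)) A) mu = 0" using A by (auto simp: count_list_0_iff)
    have cnt: "count_list W mu = Suc (count_list W1 mu)" using W c1 unfolding W1_def by simp
    have len: "length W1 < length W" using W unfolding W1_def by simp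
    have ge: "\<forall>a\<in>set W1. mu \<le> a" using A less.prems W unfolding W1_def by auto
    have "actP p W (pt p q r (prep (count_list W mu) b)) = actP p W1 (XX p mu (pt p q r (case_nat 0 (prep (count_list W1 mu) b))))"
    proof -
      have pe: "actP p W x = actP p W1 (XX p mu x)" for x unfolding W1_def W(1) using peel[OF assms(1) A] .
      show ?thesis unfolding pe cnt prepSuc ..
    qed
    also have "\<dots> = actP p W1 (pt p q r (prep (count_list W1 mu) b))"
      using X2[OF assms(1,2)] assms(3) by simp
    also have "\<dots> = pt p q r b" using less.hyps[OF len ge] .
    finally show ?thesis .
  qed
qed



fun raNF :: "nat \<Rightarrow> nat list \<Rightarrow> bool" where
  "raNF p (a # b # W) = (b \<le> a + (p-1) \<and> raNF p (b # W))"
| "raNF p _ = True"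

lemma raNF_split: "raNF p (xs @ y # ys) \<longleftrightarrow> raNF p (xs @ [y]) \<and> raNF p (y # ys)"
proof (induction xs)
  case (Cons x xs)
  then show ?case by (cases xs) auto
qed simp

lemma raNF_map: "raNF p (map (\<lambda>a. a + c) W) = raNF p W"
  by (induction p W rule: raNF.induct) auto

lemma raNF_tl: "raNF p (a # W) \<Longrightarrow> raNF p W"
  by (cases W) auto

lemma raNF_butlast: "raNF p (xs @ [y]) \<Longrightarrow> raNF p xs"
proof (induction xs rule: rev_induct)
  case (snoc x xs)
  then show ?case using raNF_split[of p xs x "[y]"] by simp
qed simp

lemma raNF_char: "raNF p W \<longleftrightarrow> (\<forall>xs a b ys. W = xs @ [a, b] @ ys \<longrightarrow> b \<le> a + (p-1))"
proof (induction p W rule: raNF.induct)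
  case (1 p a b W)
  show ?case
  proof
    assume h: "raNF p (a # b # W)"
    show "\<forall>xs a' b' ys. a # b # W = xs @ [a', b'] @ ys \<longrightarrow> b' \<le> a' + (p-1)"
    proof (intro allI impI)
      fix xs a' b' ys assume e: "a # b # W = xs @ [a', b'] @ ys"
      show "b' \<le> a' + (p-1)"
      proof (cases xs)
        case Nil then show ?thesis using e h by simp
      next
        case (Cons x xs')
        then have e2: "b # W = xs' @ [a', b'] @ ys" using e by simp
        have r: "raNF p (b # W)" using h by simp
        have "\<forall>xs a2 b2 ys. b # W = xs @ [a2, b2] @ ys \<longrightarrow> b2 \<le> a2 + (p-1)" by (rule iffD1[OF 1 r])
        then show ?thesis using e2 by blast
      qed
    qed
  next
    assume h: "\<forall>xs a' b' ys. a # b # W = xs @ [a', b'] @ ys \<longrightarrow> b' \<le> a' + (p-1)"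
    have "b \<le> a + (p-1)" using h[rule_format, of "[]"] by simp
    moreover have "\<forall>xs a' b' ys. b # W = xs @ [a', b'] @ ys \<longrightarrow> b' \<le> a' + (p-1)"
    proof (intro allI impI)
      fix xs a' b' ys assume "b # W = xs @ [a', b'] @ ys"
      then have "a # b # W = (a # xs) @ [a', b'] @ ys" by simp
      then show "b' \<le> a' + (p-1)" using h by blast
    qed
    ultimately show "raNF p (a # b # W)" using 1 by simp
  qed
next
  case ("2_1" p)
  then show ?case by simp
next
  case ("2_2" p v)
  then show ?case by (simp add: Cons_eq_append_conv)
qed

lemma raNF_W1: assumes "raNF p (A @ mu # B)" "\<forall>a\<in>set A. mu < a"
  shows "raNF p (map (\<lambda>a. a + (p-1)) A @ B)"
proof -
  have h1: "raNF p (A @ [mu])" and h2: "raNF p (mu # B)" using assms(1) raNF_split[of p A mu B] by auto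
  show ?thesis
  proof (cases "A = []")
    case True then show ?thesis using raNF_tl[OF h2] by simp
  next
    case False
    then obtain A' x where A: "A = A' @ [x]" by (metis rev_exhaust)
    have hA: "raNF p (A' @ [x])" using raNF_butlast[OF h1[unfolded A]] by simp
    have mA: "raNF p (map (\<lambda>a. a + (p-1)) A' @ [x + (p-1)])"
      using hA raNF_map[of p "p-1" "A' @ [x]"] by simp
    have x: "mu < x" using assms(2) A by simp
    have tl: "raNF p ((x + (p-1)) # B)"
    proof (cases B)
      case Nil then show ?thesis by simp
    next
      case (Cons y B')
      then show ?thesis using h2 x by auto
    qed
    show ?thesis unfolding A using raNF_split[of p "map (\<lambda>a. a + (p-1)) A'" "x + (p-1)" B] mA tl by simp
  qed
qed

lemma recon: assumes "p \<ge> 2" "raNF p (A @ mu # B)" "\<forall>a\<in>set A. mu < a"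
  shows "takeWhile (\<lambda>a. mu + p \<le> a) (map (\<lambda>a. a + (p-1)) A @ B) = map (\<lambda>a. a + (p-1)) A"
    "dropWhile (\<lambda>a. mu + p \<le> a) (map (\<lambda>a. a + (p-1)) A @ B) = B"
proof -
  have h2: "raNF p (mu # B)" using assms(2) raNF_split[of p A mu B] by auto
  have all: "\<forall>a\<in>set (map (\<lambda>a. a + (p-1)) A). mu + p \<le> a" using assms(1,3) by auto
  have "B = [] \<or> (\<exists>y B'. B = y # B' \<and> y \<le> mu + (p-1))" using h2 by (cases B) auto
  then have nb: "takeWhile (\<lambda>a. mu + p \<le> a) B = []" "dropWhile (\<lambda>a. mu + p \<le> a) B = B"
    using assms(1) by auto
  show "takeWhile (\<lambda>a. mu + p \<le> a) (map (\<lambda>a. a + (p-1)) A @ B) = map (\<lambda>a. a + (p-1)) A"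
    using takeWhile_append2[of "map (\<lambda>a. a + (p-1)) A" "\<lambda>a. mu + p \<le> a" B] all nb by simp
  show "dropWhile (\<lambda>a. mu + p \<le> a) (map (\<lambda>a. a + (p-1)) A @ B) = B"
    using dropWhile_append2[of "map (\<lambda>a. a + (p-1)) A" "\<lambda>a. mu + p \<le> a" B] all nb by simp
qed

definition b0 :: "nat \<Rightarrow> nat" where "b0 = (\<lambda>n. if n = 0 then 1 else 0)"

lemma sep: assumes "p \<ge> 2" "W \<noteq> []" "\<forall>a\<in>set W'. Min (set W) < a"
  shows "\<exists>s\<in>VV p. actP p W s \<noteq> actP p W' s"
proof -
  define mu where "mu = Min (set W)"
  define q where "q = mu div (p-1)"
  define r where "r = mu mod (p-1)"
  have mu: "mu = q * (p-1) + r" unfolding q_def r_def using div_mult_mod_eq[of mu "p-1"] by simp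
  have r: "r < p - 1" unfolding r_def using assms(1) by simp
  have inW: "mu \<in> set W" unfolding mu_def using assms(2) by simp
  have ge: "\<forall>a\<in>set W. mu \<le> a" unfolding mu_def by simp
  define c where "c = count_list W mu"
  have c: "c > 0" unfolding c_def using inW count_list_0_iff by fastforce
  define x where "x = pt p q r (prep c b0)"
  have xV: "x \<in> VV p" unfolding x_def VV_def pt_def prep_def b0_def using assms(1) r by auto
  have "actP p W x = pt p q r b0" unfolding x_def c_def using DET[OF assms(1) r mu ge] .
  moreover have "actP p W' x = x" unfolding x_def using fixall[OF assms(1) r] assms(3) mu mu_def by simp
  moreover have "x \<noteq> pt p q r b0"
  proof
    assume "x = pt p q r b0"
    then have "x (Suc q) = pt p q r b0 (Suc q)" by simp
    then show False unfolding x_def pt_def prep_def b0_def using c by simp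
  qed
  ultimately show ?thesis using xV by metis
qed

lemma unmap: "map (\<lambda>a. a - c) (map (\<lambda>a. a + c) A) = (A::nat list)"
  by (induction A) auto

lemma below_min: "\<forall>a\<in>set A. (m::nat) \<le> a \<Longrightarrow> m \<notin> set A \<Longrightarrow> \<forall>a\<in>set A. m < a"
  using le_neq_implies_less by blast

lemma INJ: assumes "p \<ge> 2"
  shows "raNF p W \<Longrightarrow> raNF p W' \<Longrightarrow> \<forall>s\<in>VV p. actP p W s = actP p W' s \<Longrightarrow> W = W'"
proof (induction "length W" arbitrary: W W' rule: less_induct)
  case less
  show ?case
  proof (cases "W = [] \<or> W' = []")
    case True
    then show ?thesis
    proof
      assume W: "W = []"
      show ?thesis
      proof (rule ccontr)
        assume "W \<noteq> W'"
        then have ne: "W' \<noteq> []" using W by simp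
        obtain s where "s \<in> VV p" "actP p W' s \<noteq> actP p W s" using sep[OF assms ne, of W] W by auto
        then show False using less.prems(3) by simp
      qed
    next
      assume W: "W' = []"
      show ?thesis
      proof (rule ccontr)
        assume "W \<noteq> W'"
        then have ne: "W \<noteq> []" using W by simp
        obtain s where "s \<in> VV p" "actP p W s \<noteq> actP p W' s" using sep[OF assms ne, of W'] W by auto
        then show False using less.prems(3) by simp
      qed
    qed
  next
    case False
    then have ne: "W \<noteq> []" "W' \<noteq> []" by auto
    define mu where "mu = Min (set W)"
    have minW: "\<forall>a\<in>set W. mu \<le> a" unfolding mu_def by simp
    have minW': "\<forall>a\<in>set W'. Min (set W') \<le> a" by simp
    have eq: "Min (set W') = mu"
    proof (rule ccontr)
      assume "Min (set W') \<noteq> mu"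
      then consider "mu < Min (set W')" | "Min (set W') < mu" by linarith
      then show False
      proof cases
        case 1
        then have "\<forall>a\<in>set W'. Min (set W) < a" using minW' unfolding mu_def[symmetric] using less_le_trans by blast
        then obtain s where "s \<in> VV p" "actP p W s \<noteq> actP p W' s" using sep[OF assms ne(1)] by blast
        then show False using less.prems(3) by simp
      next
        case 2
        then have "\<forall>a\<in>set W. Min (set W') < a" using minW less_le_trans by blast
        then obtain s where "s \<in> VV p" "actP p W' s \<noteq> actP p W s" using sep[OF assms ne(2)] by blast
        then show False using less.prems(3) by simp
      qed
    qed
    have inW: "mu \<in> set W" unfolding mu_def using ne(1) by simp
    have inW': "mu \<in> set W'" unfolding eq[symmetric] using ne(2) by simp
    obtain A B where W: "W = A @ mu # B" "mu \<notin> set A" using inW by (meson split_list_first)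
    obtain A' B' where W': "W' = A' @ mu # B'" "mu \<notin> set A'" using inW' by (meson split_list_first)
    have A: "\<forall>a\<in>set A. mu < a" using below_min[OF _ W(2)] minW W(1) by simp
    have mW': "\<forall>a\<in>set W'. mu \<le> a" using minW' eq by simp
    have "\<forall>a\<in>set A'. mu \<le> a" using mW' W'(1) by simp
    then have A': "\<forall>a\<in>set A'. mu < a" using below_min[OF _ W'(2)] by blast
    define W1 where "W1 = map (\<lambda>a. a + (p-1)) A @ B"
    define W1' where "W1' = map (\<lambda>a. a + (p-1)) A' @ B'"
    have rW: "raNF p (A @ mu # B)" using less.prems(1) W by simp
    have rW': "raNF p (A' @ mu # B')" using less.prems(2) W' by simp
    have r1: "raNF p W1" unfolding W1_def using raNF_W1[OF rW A] .
    have r1': "raNF p W1'" unfolding W1'_def using raNF_W1[OF rW' A'] .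
    have len: "length W1 < length W" unfolding W1_def W by simp
    have act1: "\<forall>s\<in>VV p. actP p W1 s = actP p W1' s"
    proof
      fix t assume t: "t \<in> VV p"
      define s where "s = YY p mu t"
      have sV: "s \<in> VV p" and ts: "t = XX p mu s" unfolding s_def using YY_VV[OF assms t] XY[OF assms t] by auto
      have "actP p W s = actP p W' s" using less.prems(3) sV by simp
      then show "actP p W1 t = actP p W1' t"
        unfolding ts W1_def W1'_def using peel[OF assms A, of B s] peel[OF assms A', of B' s] W W' by simp
    qed
    have "W1 = W1'" using less.hyps[OF len r1 r1' act1] .
    then have m: "map (\<lambda>a. a + (p-1)) A = map (\<lambda>a. a + (p-1)) A'" and "B = B'"
      using recon[OF assms rW A] recon[OF assms rW' A'] unfolding W1_def W1'_def by metis+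
    have "A = A'" using unmap[of "p-1" A] unmap[of "p-1" A'] m by metis
    then show ?thesis using W W' \<open>B = B'\<close> by simp
  qed
qed



inductive sw :: "nat \<Rightarrow> (nat \<times> nat) list \<Rightarrow> (nat \<times> nat) list \<Rightarrow> bool" for p where
  swI: "a + (p-1) < b \<Longrightarrow> sw p (xs @ [(a,r1),(b,r2)] @ ys) (xs @ [(b-(p-1),r2),(a,r1)] @ ys)"

definition app :: "nat \<Rightarrow> nat \<Rightarrow> (nat \<Rightarrow> nat) \<Rightarrow> (nat \<Rightarrow> nat)" where
  "app p c L = (\<lambda>k. if k \<le> c then L k else L (k + (p-1)))"

fun stLL :: "nat \<Rightarrow> (nat \<times> nat) list \<Rightarrow> (nat \<Rightarrow> nat) \<Rightarrow> (nat \<Rightarrow> nat)" where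
  "stLL p [] L = L"
| "stLL p (x # w) L = app p (fst x) (stLL p w L)"

fun lorL :: "nat \<Rightarrow> (nat \<times> nat) list \<Rightarrow> (nat \<Rightarrow> nat) \<Rightarrow> (nat \<times> nat) list" where
  "lorL p [] L = []"
| "lorL p (x # w) L = (stLL p w L (fst x), snd x) # lorL p w L"

lemma stLL_append: "stLL p (xs @ ys) L = stLL p xs (stLL p ys L)"
  by (induction xs) auto
lemma lorL_append: "lorL p (xs @ ys) L = lorL p xs (stLL p ys L) @ lorL p ys L"
  by (induction xs) (auto simp: stLL_append)

lemma stLL_bound: "k \<le> stLL p w (\<lambda>k. k) k \<and> stLL p w (\<lambda>k. k) k \<le> k + (p-1) * length w"
proof (induction w arbitrary: k)
  case (Cons x w)
  show ?case
  proof (cases "k \<le> fst x")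
    case True then show ?thesis using Cons[of k] by (simp add: app_def)
  next
    case False
    have "(p-1) + (p-1) * length w = (p-1) * length (x # w)" by simp
    then show ?thesis using Cons[of "k + (p-1)"] False by (simp add: app_def)
  qed
qed simp

lemma lem1: "x \<in> set w \<Longrightarrow> \<exists>lo. (lo, snd x) \<in> set (lorL p w (\<lambda>k. k)) \<and> fst x \<le> lo \<and> lo \<le> fst x + (p-1) * (length w - 1)"
proof (induction w)
  case (Cons y w)
  show ?case
  proof (cases "x = y")
    case True
    then show ?thesis using stLL_bound[of "fst y" p w] by auto
  next
    case False
    then have "x \<in> set w" using Cons by simp
    then obtain lo where "(lo, snd x) \<in> set (lorL p w (\<lambda>k. k))" "fst x \<le> lo" "lo \<le> fst x + (p-1) * (length w - 1)"
      using Cons by blast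
    moreover have "(p-1) * (length w - 1) \<le> (p-1) * (length (y # w) - 1)" by simp
    ultimately have "(lo, snd x) \<in> set (lorL p (y # w) (\<lambda>k. k))" "fst x \<le> lo" "lo \<le> fst x + (p-1) * (length (y # w) - 1)"
      by (auto intro: le_trans)
    then show ?thesis by blast
  qed
qed simp

lemma lem2: "(lo, r) \<in> set (lorL p w (\<lambda>k. k)) \<Longrightarrow> \<exists>c. (c, r) \<in> set w \<and> c \<le> lo"
proof (induction w)
  case (Cons y w)
  show ?case
  proof (cases "(lo, r) = (stLL p w (\<lambda>k. k) (fst y), snd y)")
    case True
    then show ?thesis using stLL_bound[of "fst y" p w] by (cases y) auto
  next
    case False
    then have "(lo, r) \<in> set (lorL p w (\<lambda>k. k))" using Cons.prems by auto
    then show ?thesis using Cons.IH by auto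
  qed
qed simp

lemma sw_core: assumes "a + (p-1) < b"
  shows "stLL p [(b-(p-1),r2),(a,r1)] L = stLL p [(a,r1),(b,r2)] L"
    "set (lorL p [(b-(p-1),r2),(a,r1)] L) = set (lorL p [(a,r1),(b,r2)] L)"
  using assms by (auto simp: app_def intro!: ext)

lemma sw_vals: assumes "a + (p-1) < b"
  shows "app p a L (b - (p-1)) = L b" "app p b L a = L a"
  using assms by (auto simp: app_def)

lemma sw_props_all: assumes "sw p A B"
  shows "length B = length A \<and> (\<forall>y\<in>set B. \<exists>z\<in>set A. snd z = snd y \<and> fst y \<le> fst z) \<and>
    set (lorL p B (\<lambda>k. k)) = set (lorL p A (\<lambda>k. k))"
  using assms
proof cases
  case (swI a b xs r1 r2 ys)
  have 1: "length B = length A" using swI by simp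
  have 2: "\<forall>y\<in>set B. \<exists>z\<in>set A. snd z = snd y \<and> fst y \<le> fst z" using swI by auto
  have 3: "set (lorL p B (\<lambda>k. k)) = set (lorL p A (\<lambda>k. k))"
    using swI sw_core[OF swI(3), of r2 r1 "stLL p ys (\<lambda>k. k)"] sw_vals[OF swI(3)]
    by (simp add: lorL_append stLL_append insert_commute)
  show ?thesis using 1 2 3 by blast
qed

lemmas sw_props = sw_props_all[THEN conjunct1] sw_props_all[THEN conjunct2, THEN conjunct1]
  sw_props_all[THEN conjunct2, THEN conjunct2]

lemma sws_props: assumes "(sw p)\<^sup>*\<^sup>* A B"
  shows "length B = length A \<and> (\<forall>y\<in>set B. \<exists>z\<in>set A. snd z = snd y \<and> fst y \<le> fst z)
    \<and> set (lorL p B (\<lambda>k. k)) = set (lorL p A (\<lambda>k. k))"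
  using assms
proof (induction rule: rtranclp_induct)
  case (step B C)
  have "length C = length A" using sw_props(1)[OF step(2)] step(3) by simp
  moreover have "\<forall>y\<in>set C. \<exists>z\<in>set A. snd z = snd y \<and> fst y \<le> fst z"
  proof
    fix y assume "y \<in> set C"
    then obtain z where z: "z \<in> set B" "snd z = snd y" "fst y \<le> fst z" using sw_props(2)[OF step(2)] by blast
    then obtain z' where "z' \<in> set A" "snd z' = snd z" "fst z \<le> fst z'" using step(3) by blast
    then show "\<exists>z\<in>set A. snd z = snd y \<and> fst y \<le> fst z" using z by (metis le_trans)
  qed
  moreover have "set (lorL p C (\<lambda>k. k)) = set (lorL p A (\<lambda>k. k))" using sw_props(3)[OF step(2)] step(3) by simp
  ultimately show ?case by blast
qed auto

lemma SWB: assumes "(sw p)\<^sup>*\<^sup>* A B" "y \<in> set B"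
  shows "\<exists>z\<in>set A. snd z = snd y \<and> fst y \<le> fst z"
    "\<exists>z\<in>set A. snd z = snd y \<and> fst z \<le> fst y + (p-1) * (length B - 1)"
proof -
  show "\<exists>z\<in>set A. snd z = snd y \<and> fst y \<le> fst z" using sws_props[OF assms(1)] assms(2) by blast
  obtain lo where lo: "(lo, snd y) \<in> set (lorL p B (\<lambda>k. k))" "fst y \<le> lo" "lo \<le> fst y + (p-1) * (length B - 1)"
    using lem1[OF assms(2)] by blast
  then have "(lo, snd y) \<in> set (lorL p A (\<lambda>k. k))" using sws_props[OF assms(1)] by simp
  then obtain c where "(c, snd y) \<in> set A" "c \<le> lo" using lem2 by blast
  then show "\<exists>z\<in>set A. snd z = snd y \<and> fst z \<le> fst y + (p-1) * (length B - 1)" using lo(3)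
    by (intro bexI[of _ "(c, snd y)"]) auto
qed



abbreviation sg :: "tletter \<Rightarrow> int" where "sg z \<equiv> fst (snd z)"
abbreviation og :: "tletter \<Rightarrow> nat" where "og z \<equiv> snd (snd z)"

definition posL :: "tletter list \<Rightarrow> (nat \<times> nat) list" where
  "posL w = map (\<lambda>z. (fst z, og z)) (filter (\<lambda>z. sg z = 1) w)"
definition negL :: "tletter list \<Rightarrow> (nat \<times> nat) list" where
  "negL w = map (\<lambda>z. (fst z, og z)) (filter (\<lambda>z. sg z = -1) w)"
definition embP :: "(nat \<times> nat) list \<Rightarrow> tletter list" where
  "embP P = map (\<lambda>x. (fst x, 1, snd x)) P"
definition embN :: "(nat \<times> nat) list \<Rightarrow> tletter list" where
  "embN P = map (\<lambda>x. (fst x, -1, snd x)) P"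

lemma ra_one: assumes "p \<ge> 2" "ra_step p u v"
  shows "(sw p)\<^sup>*\<^sup>* (posL u) (posL v) \<and> (sw p)\<^sup>*\<^sup>* (rev (negL u)) (rev (negL v)) \<and> map sg v = map sg u"
  using assms(2)
proof cases
  case (ra_pos xs a r1 b r2 ys)
  have lt: "a + (p-1) < b" and e: "Suc (b - p) = b - (p - Suc 0)" using ra_pos(4) assms(1) by auto
  have "sw p (posL u) (posL v)" unfolding ra_pos posL_def using swI[OF lt, of "posL xs" r1 r2 "posL ys"]
    by (simp add: posL_def e)
  moreover have "negL v = negL u" unfolding ra_pos negL_def by simp
  ultimately show ?thesis using ra_pos by auto
next
  case (ra_neg xs a r1 b r2 ys)
  have lt: "b + (p-1) < a" and e: "Suc (a - p) = a - (p - Suc 0)" using ra_neg(4) assms(1) by auto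
  have "sw p (rev (negL u)) (rev (negL v))" unfolding ra_neg negL_def
    using swI[OF lt, of "rev (negL ys)" r2 r1 "rev (negL xs)"] by (simp add: negL_def e)
  moreover have "posL v = posL u" unfolding ra_neg posL_def by simp
  ultimately show ?thesis using ra_neg by auto
qed

lemma ra_many: assumes "p \<ge> 2" "(ra_step p)\<^sup>*\<^sup>* u v"
  shows "(sw p)\<^sup>*\<^sup>* (posL u) (posL v) \<and> (sw p)\<^sup>*\<^sup>* (rev (negL u)) (rev (negL v)) \<and> map sg v = map sg u
    \<and> (\<forall>s\<in>VV p. act p (strip v) s = act p (strip u) s)"
  using assms(2)
proof (induction rule: rtranclp_induct)
  case (step v w)
  have o: "(sw p)\<^sup>*\<^sup>* (posL v) (posL w) \<and> (sw p)\<^sup>*\<^sup>* (rev (negL v)) (rev (negL w)) \<and> map sg w = map sg v"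
    using ra_one[OF assms(1) step(2)] .
  have a: "\<forall>s\<in>VV p. act p (strip w) s = act p (strip v) s" using ra_act[OF assms(1) step(2)] by simp
  show ?case
  proof (intro conjI)
    show "(sw p)\<^sup>*\<^sup>* (posL u) (posL w)" using step(3) o by (meson rtranclp_trans)
    show "(sw p)\<^sup>*\<^sup>* (rev (negL u)) (rev (negL w))" using step(3) o by (meson rtranclp_trans)
    show "map sg w = map sg u" using step(3) o by simp
    show "\<forall>s\<in>VV p. act p (strip w) s = act p (strip u) s" using step(3) a by simp
  qed
qed auto

lemma sorted_split: "map sg w = replicate k 1 @ replicate l (-1) \<Longrightarrow> w = embP (posL w) @ embN (negL w)"
proof (induction w arbitrary: k)
  case Nil then show ?case by (simp add: embP_def embN_def posL_def negL_def)
next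
  case (Cons z w)
  show ?case
  proof (cases k)
    case 0
    then have all: "\<forall>x\<in>set (z # w). sg x = -1" using Cons.prems
      by (metis in_set_replicate list.set_map image_eqI self_append_conv2 replicate_0)
    then have "filter (\<lambda>z. sg z = 1) (z # w) = []" by (induction w) auto
    moreover have "filter (\<lambda>z. sg z = -1) (z # w) = z # w" using all by simp
    moreover have "map (\<lambda>x. (fst x, -1, snd x)) (map (\<lambda>z. (fst z, og z)) (z # w)) = z # w"
    proof -
      have "map (\<lambda>x. (fst x, -1, snd x)) (map (\<lambda>z. (fst z, og z)) L) = L" if "\<forall>x\<in>set L. sg x = -1" for L :: "tletter list"
        using that by (induction L) (auto simp: prod_eq_iff)
      then show ?thesis using all by blast
    qed
    ultimately show ?thesis by (simp add: embP_def embN_def posL_def negL_def del: filter.simps list.map)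
  next
    case (Suc k')
    then have "sg z = 1" "map sg w = replicate k' 1 @ replicate l (-1)" using Cons.prems by auto
    then show ?thesis using Cons.IH[of k'] by (cases z) (auto simp: embP_def embN_def posL_def negL_def)
  qed
qed

lemma repl_no: "replicate k (1::int) @ replicate l (-1) \<noteq> xs @ [-1, 1] @ ys"
proof
  assume h: "replicate k (1::int) @ replicate l (-1) = xs @ [-1, 1] @ ys"
  let ?L = "replicate k (1::int) @ replicate l (-1)"
  have "?L ! length xs = -1" "?L ! Suc (length xs) = 1" unfolding h by (simp_all add: nth_append)
  moreover have "length xs < length ?L" "Suc (length xs) < length ?L" unfolding h by simp_all
  ultimately show False by (auto simp: nth_append split: if_splits)
qed

lemma sorted_irr: assumes "map sg w = replicate k 1 @ replicate l (-1)" shows "rs_irreducible p w"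
  unfolding rs_irreducible_def
proof
  assume "\<exists>v. rs_step p w v"
  then obtain v where "rs_step p w v" by blast
  then obtain xs a r1 b r2 ys where "w = xs @ [(a,-1,r1),(b,1,r2)] @ ys" by cases auto
  then have "map sg w = map sg xs @ [-1, 1] @ map sg ys" by simp
  then show False using assms repl_no by metis
qed

lemma irr_sorted: assumes "rs_irreducible p w" "\<forall>z\<in>set w. sg z \<in> {1, -1}"
  shows "\<exists>k l. map sg w = replicate k 1 @ replicate l (-1)"
  using assms
proof (induction w)
  case Nil then show ?case by (metis append_Nil list.simps(8) replicate_0)
next
  case (Cons z w)
  have irr: "rs_irreducible p w"
    unfolding rs_irreducible_def
  proof
    assume "\<exists>v. rs_step p w v"
    then obtain v where "rs_step p w v" by blast
    then have "rs_step p (z # w) (z # v)"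
      by cases (metis append_Cons rs_step.intros)+
    then show False using Cons.prems(1) unfolding rs_irreducible_def by blast
  qed
  obtain k l where kl: "map sg w = replicate k 1 @ replicate l (-1)" using Cons irr by auto
  show ?case
  proof (cases "sg z = 1")
    case True then show ?thesis using kl by (metis list.simps(9) replicate_Suc append_Cons)
  next
    case False
    then have z: "sg z = -1" using Cons.prems(2) by auto
    show ?thesis
    proof (cases k)
      case 0 then show ?thesis using kl z by (metis list.simps(9) replicate_Suc append_Nil replicate_0)
    next
      case (Suc k')
      then obtain y w' where w: "w = y # w'" "sg y = 1" using kl by (cases w) auto
      obtain a r1 where za: "z = (a, -1, r1)" using z by (metis prod.collapse)
      obtain b r2 where yb: "y = (b, 1, r2)" using w by (metis prod.collapse)
      have "\<exists>v. rs_step p (z # w) v"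
      proof (cases "a > b")
        case True then show ?thesis unfolding za w yb using rs_gt[of b a p "[]"] by auto
      next
        case False
        then show ?thesis unfolding za w yb using rs_lt[of a b p "[]"] rs_eq[of a b p "[]"]
          by (cases "a = b") auto
      qed
      then show ?thesis using Cons.prems(1) unfolding rs_irreducible_def by blast
    qed
  qed
qed

lemma map_fst_split: "map fst P = xs @ [a, b] @ ys \<Longrightarrow> \<exists>P1 r1 r2 P2. P = P1 @ [(a, r1), (b, r2)] @ P2"
proof (induction xs arbitrary: P)
  case Nil
  then obtain x y P2 where "P = x # y # P2" "fst x = a" "fst y = b"
    by (cases P; cases "tl P") auto
  then show ?case by (metis append_Nil append_Cons prod.collapse)
next
  case (Cons x xs)
  then obtain y P' where P: "P = y # P'" "map fst P' = xs @ [a, b] @ ys" by (cases P) auto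
  then obtain P1 r1 r2 P2 where "P' = P1 @ [(a, r1), (b, r2)] @ P2" using Cons.IH by blast
  then show ?case using P by (metis append_Cons)
qed

lemma irr_NF: assumes "p \<ge> 2" "ra_irreducible p v" "map sg v = replicate k 1 @ replicate l (-1)"
  shows "raNF p (map fst (posL v))" "raNF p (rev (map fst (negL v)))"
proof -
  have v: "v = embP (posL v) @ embN (negL v)" using sorted_split[OF assms(3)] .
  have irr: "rs_irreducible p v" using sorted_irr[OF assms(3)] .
  show "raNF p (map fst (posL v))" unfolding raNF_char
  proof (intro allI impI)
    fix xs a b ys assume h: "map fst (posL v) = xs @ [a, b] @ ys"
    show "b \<le> a + (p-1)"
    proof (rule ccontr)
      assume nb: "\<not> b \<le> a + (p-1)"
      obtain P1 r1 r2 P2 where P: "posL v = P1 @ [(a, r1), (b, r2)] @ P2" using map_fst_split[OF h] by blast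
      have v2: "v = embP P1 @ [(a, 1, r1), (b, 1, r2)] @ (embP P2 @ embN (negL v))"
        using v unfolding P by (simp add: embP_def)
      have "ra_step p v (embP P1 @ [(b - p + 1, 1, r2), (a, 1, r1)] @ (embP P2 @ embN (negL v)))"
        using ra_pos[of p "embP P1" a r1 b r2 "embP P2 @ embN (negL v)"] irr v2 nb by auto
      then show False using assms(2) unfolding ra_irreducible_def by blast
    qed
  qed
  show "raNF p (rev (map fst (negL v)))" unfolding raNF_char
  proof (intro allI impI)
    fix xs a b ys assume h: "rev (map fst (negL v)) = xs @ [a, b] @ ys"
    then have h2: "map fst (negL v) = rev ys @ [b, a] @ rev xs" by (metis rev_append rev_rev_ident rev.simps append_Cons append_Nil append.assoc)
    show "b \<le> a + (p-1)"
    proof (rule ccontr)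
      assume nb: "\<not> b \<le> a + (p-1)"
      obtain N1 r1 r2 N2 where N: "negL v = N1 @ [(b, r1), (a, r2)] @ N2" using map_fst_split[OF h2] by blast
      have v2: "v = (embP (posL v) @ embN N1) @ [(b, -1, r1), (a, -1, r2)] @ embN N2"
        using v unfolding N by (simp add: embN_def)
      have "ra_step p v ((embP (posL v) @ embN N1) @ [(a, -1, r2), (b - p + 1, -1, r1)] @ embN N2)"
        using ra_neg[of p "embP (posL v) @ embN N1" b r1 a r2 "embN N2"] irr v2 nb by auto
      then show False using assms(2) unfolding ra_irreducible_def by blast
    qed
  qed
qed



definition Dv :: "tletter list \<Rightarrow> tletter \<Rightarrow> tletter list \<Rightarrow> int" where
  "Dv as y bs = (if sg y = 1
     then int (length (filter (\<lambda>z. sg z = -1 \<and> og z < og y) bs)) - int (length (filter (\<lambda>z. sg z = -1 \<and> og y \<le> og z) as))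
     else int (length (filter (\<lambda>z. sg z = 1 \<and> og y < og z) as)) - int (length (filter (\<lambda>z. sg z = 1 \<and> og z \<le> og y) bs)))"

definition INV :: "nat \<Rightarrow> (nat \<Rightarrow> nat) \<Rightarrow> tletter list \<Rightarrow> bool" where
  "INV p i u \<longleftrightarrow> (\<forall>as y bs. u = as @ y # bs \<longrightarrow>
     i (og y) \<le> fst y \<and> int (fst y) - int (i (og y)) \<le> int (p-1) * Dv as y bs)"

lemma split4: "as @ z # bs = XS @ [y', x'] @ YS \<Longrightarrow>
  (\<exists>cs. XS = as @ z # cs \<and> bs = cs @ [y', x'] @ YS) \<or> (as = XS \<and> z = y' \<and> bs = x' # YS) \<or>
  (as = XS @ [y'] \<and> z = x' \<and> bs = YS) \<or> (\<exists>cs. as = XS @ [y', x'] @ cs \<and> YS = cs @ z # bs)"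
proof (induction as arbitrary: XS)
  case Nil
  then show ?case by (cases XS) auto
next
  case (Cons a as)
  show ?case
  proof (cases XS)
    case Nil
    then have "as @ z # bs = x' # YS" "a = y'" using Cons.prems by auto
    then show ?thesis using Nil by (cases as) auto
  next
    case (Cons c XS')
    then have "as @ z # bs = XS' @ [y', x'] @ YS" "a = c" using Cons.prems by auto
    then show ?thesis using Cons.IH[of XS'] \<open>XS = c # XS'\<close> by auto
  qed
qed

lemma INV_step_gen: assumes "INV p i u" "u = XS @ [(a, -1, r1), (b, 1, r2)] @ YS"
  "b \<le> b'" "b' \<le> b + (p-1)" "a \<le> a'" "a' \<le> a + (p-1)"
  shows "INV p i (XS @ [(b', 1, r2), (a', -1, r1)] @ YS)"
  unfolding INV_def
proof (intro allI impI)
  fix as z bs assume h: "XS @ [(b', 1, r2), (a', -1, r1)] @ YS = as @ z # bs"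
  have old: "\<And>as z bs. u = as @ z # bs \<Longrightarrow> i (og z) \<le> fst z \<and> int (fst z) - int (i (og z)) \<le> int (p-1) * Dv as z bs"
    using assms(1) unfolding INV_def by blast
  consider (c1) cs where "XS = as @ z # cs" "bs = cs @ [(b', 1, r2), (a', -1, r1)] @ YS"
    | (c2) "as = XS" "z = (b', 1, r2)" "bs = (a', -1, r1) # YS"
    | (c3) "as = XS @ [(b', 1, r2)]" "z = (a', -1, r1)" "bs = YS"
    | (c4) cs where "as = XS @ [(b', 1, r2), (a', -1, r1)] @ cs" "YS = cs @ z # bs"
    using split4[OF h[symmetric]] by blast
  then show "i (og z) \<le> fst z \<and> int (fst z) - int (i (og z)) \<le> int (p-1) * Dv as z bs"
  proof cases
    case c1
    have "u = as @ z # (cs @ [(a, -1, r1), (b, 1, r2)] @ YS)" using assms(2) c1 by simp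
    note o = old[OF this]
    have "Dv as z (cs @ [(a, -1, r1), (b, 1, r2)] @ YS) = Dv as z bs" unfolding c1 Dv_def by simp
    then show ?thesis using o by simp
  next
    case c2
    have "u = (XS @ [(a, -1, r1)]) @ (b, 1, r2) # YS" using assms(2) by simp
    note o = old[OF this]
    have "Dv as z bs = Dv (XS @ [(a, -1, r1)]) (b, 1, r2) YS + 1" unfolding c2 Dv_def by auto
    then show ?thesis using o c2 assms(3,4) by (simp add: algebra_simps)
  next
    case c3
    have "u = XS @ (a, -1, r1) # ((b, 1, r2) # YS)" using assms(2) by simp
    note o = old[OF this]
    have "Dv as z bs = Dv XS (a, -1, r1) ((b, 1, r2) # YS) + 1" unfolding c3 Dv_def by auto
    then show ?thesis using o c3 assms(5,6) by (simp add: algebra_simps)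
  next
    case c4
    have "u = (XS @ [(a, -1, r1), (b, 1, r2)] @ cs) @ z # bs" using assms(2) c4 by simp
    note o = old[OF this]
    have "Dv (XS @ [(a, -1, r1), (b, 1, r2)] @ cs) z bs = Dv as z bs" unfolding c4 Dv_def by simp
    then show ?thesis using o by simp
  qed
qed

lemma INV_step: assumes "p \<ge> 2" "INV p i u" "rs_step p u v" shows "INV p i v"
  using assms(3)
proof cases
  case (rs_gt a b xs r1 r2 ys)
  show ?thesis unfolding rs_gt using INV_step_gen[OF assms(2) rs_gt(1), of b "a + p - 1"] assms(1) by simp
next
  case (rs_lt a b xs r1 r2 ys)
  show ?thesis unfolding rs_lt using INV_step_gen[OF assms(2) rs_lt(1), of "b + p - 1" a] assms(1) by simp
next
  case (rs_eq a b xs r1 r2 ys)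
  show ?thesis unfolding rs_eq using INV_step_gen[OF assms(2) rs_eq(1), of b a] rs_eq by simp
qed

lemma upt_split: "[m..<n] = xs @ l # ys \<Longrightarrow> (\<forall>x\<in>set xs. x < l) \<and> (\<forall>y\<in>set ys. l < y)"
  using sorted_wrt_upt[of m n] by (simp add: sorted_wrt_append)

lemma INV_init: "INV p i (tracked_word d i eps)"
  unfolding INV_def
proof (intro allI impI)
  fix as y bs assume h: "tracked_word d i eps = as @ y # bs"
  then obtain L1 l L2 where L: "[1..<d+1] = L1 @ l # L2" "as = map (\<lambda>l. (i l, eps l, l)) L1"
    "y = (i l, eps l, l)" "bs = map (\<lambda>l. (i l, eps l, l)) L2"
    unfolding tracked_word_def by (auto simp: map_eq_append_conv Cons_eq_map_conv)
  have s: "\<forall>x\<in>set L1. x < l" "\<forall>y\<in>set L2. l < y" using upt_split[OF L(1)] by auto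
  have z: "\<And>P. filter (\<lambda>x. P x \<and> x < l) L2 = []" "\<And>P. filter (\<lambda>x. P x \<and> x \<le> l) L2 = []"
    "\<And>P. filter (\<lambda>x. P x \<and> l < x) L1 = []" "\<And>P. filter (\<lambda>x. P x \<and> l \<le> x) L1 = []"
    using s by (auto simp: filter_empty_conv)
  have "Dv as y bs = 0" unfolding Dv_def L(2,3,4) by (simp add: o_def z)
  then show "i (og y) \<le> fst y \<and> int (fst y) - int (i (og y)) \<le> int (p-1) * Dv as y bs" using L(3) by simp
qed



lemma rs_many: assumes "p \<ge> 2" "(rs_step p)\<^sup>*\<^sup>* w0 u" "INV p i w0" "\<forall>z\<in>set w0. sg z \<in> {1, -1}"
  shows "INV p i u \<and> (\<forall>z\<in>set u. sg z \<in> {1, -1}) \<and> length u = length w0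
    \<and> (\<forall>s\<in>VV p. act p (strip u) s = act p (strip w0) s)"
  using assms(2)
proof (induction rule: rtranclp_induct)
  case base then show ?case using assms by simp
next
  case (step u v)
  have 1: "INV p i v" using INV_step[OF assms(1) _ step(2)] step(3) by blast
  have 2: "(\<forall>z\<in>set v. sg z \<in> {1, -1}) \<and> length v = length u"
    using step(2) step(3) by cases auto
  have 3: "\<forall>s\<in>VV p. act p (strip v) s = act p (strip u) s" using rs_act[OF assms(1) step(2)] by simp
  show ?case using 1 2 3 step(3) by simp
qed

lemma filter_and_le: "length (filter (\<lambda>z. P z \<and> Q z) xs) \<le> length (filter P xs)"
  by (induction xs) auto

lemma RSB: assumes "INV p i u" "y \<in> set u"
  shows "i (og y) \<le> fst y \<and> fst y \<le> i (og y) + (p-1) * (if sg y = 1 then length (negL u) else length (posL u))"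
proof -
  obtain as bs where u: "u = as @ y # bs" using split_list[OF assms(2)] by blast
  have o: "i (og y) \<le> fst y" "int (fst y) - int (i (og y)) \<le> int (p-1) * Dv as y bs"
    using assms(1) u unfolding INV_def by blast+
  define M where "M = (if sg y = 1 then length (negL u) else length (posL u))"
  have "Dv as y bs \<le> int M"
  proof (cases "sg y = 1")
    case True
    have "length (filter (\<lambda>z. sg z = -1 \<and> og z < og y) bs) \<le> length (filter (\<lambda>z. sg z = -1) bs)"
      by (rule filter_and_le)
    also have "\<dots> \<le> length (negL u)" unfolding u negL_def by simp
    finally show ?thesis using True unfolding Dv_def M_def by simp
  next
    case False
    have "length (filter (\<lambda>z. sg z = 1 \<and> og y < og z) as) \<le> length (filter (\<lambda>z. sg z = 1) as)"
      by (rule filter_and_le)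
    also have "\<dots> \<le> length (posL u)" unfolding u posL_def by simp
    finally show ?thesis using False unfolding Dv_def M_def by simp
  qed
  then have "int (p-1) * Dv as y bs \<le> int (p-1) * int M" by (simp add: mult_left_mono)
  then have "int (fst y) - int (i (og y)) \<le> int ((p-1) * M)" using o(2) by simp
  then show ?thesis using o(1) unfolding M_def by linarith
qed

lemma elem_bound: assumes "(sw p)\<^sup>*\<^sup>* A B" "y \<in> set B" "length B = m"
  "\<forall>z\<in>set A. i (snd z) \<le> fst z \<and> fst z \<le> i (snd z) + (p-1) * m"
  shows "fst y \<le> i (snd y) + (p-1) * m \<and> i (snd y) \<le> fst y + (p-1) * m"
proof -
  obtain z where z: "z \<in> set A" "snd z = snd y" "fst y \<le> fst z" using SWB(1)[OF assms(1,2)] by blast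
  obtain z' where z': "z' \<in> set A" "snd z' = snd y" "fst z' \<le> fst y + (p-1) * (length B - 1)"
    using SWB(2)[OF assms(1,2)] by blast
  have b: "(p-1) * (length B - 1) \<le> (p-1) * m" using assms(3) by simp
  have z1: "fst z \<le> i (snd y) + (p-1) * m" using assms(4) z(1) z(2) by metis
  have z2: "i (snd y) \<le> fst z'" using assms(4) z'(1) z'(2) by metis
  show ?thesis using z(3) z1 z2 z'(3) b by linarith
qed

lemma map_nth_upt: "map (\<lambda>l. L ! (l - 1)) [1..<length L + 1] = L"
proof -
  have "[1..<length L + 1] = map Suc [0..<length L]" by (simp add: map_Suc_upt)
  then show ?thesis by (simp add: o_def map_nth)
qed

lemma sum_even: "\<forall>x\<in>set L. x \<in> {1, -1::int} \<Longrightarrow> even (length L) \<longleftrightarrow> even (sum_list L)"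
  by (induction L) auto

definition es :: "letter list \<Rightarrow> int" where "es w = sum_list (map snd w)"

lemma fp_es: "fp_equiv p u v \<Longrightarrow> es u = es v"
proof (induction rule: fp_equiv.induct)
  case (fp_cancel e u a v)
  then show ?case by (simp add: es_def)
next
  case (fp_rel k n u v)
  then show ?case by (simp add: es_def)
qed simp_all



lemma two_split: "Suc k < length L \<Longrightarrow> L = take k L @ [L ! k, L ! Suc k] @ drop (Suc (Suc k)) L"
proof -
  assume h: "Suc k < length L"
  have "drop k L = L ! k # drop (Suc k) L" using h by (simp add: Cons_nth_drop_Suc)
  moreover have "drop (Suc k) L = L ! Suc k # drop (Suc (Suc k)) L" using h by (simp add: Cons_nth_drop_Suc)
  ultimately show ?thesis by (metis append_Cons append_Nil append_take_drop_id)
qed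

lemma int_bounds: assumes "d = 2 * m" "(j::nat) \<le> ir + (p-1) * m" "ir \<le> j + (p-1) * m" "p \<ge> 2"
  shows "- (int d * (int p - 1)) \<le> 2 * (int j - int ir) \<and> 2 * (int j - int ir) \<le> int d * (int p - 1)"
proof -
  define X where "X = (int p - 1) * int m"
  have e1: "int ((p-1) * m) = X" unfolding X_def using assms(4) by (simp add: of_nat_diff)
  have e2: "int d * (int p - 1) = 2 * X" unfolding X_def assms(1) by (simp add: algebra_simps)
  have "int j \<le> int ir + int ((p-1) * m)" "int ir \<le> int j + int ((p-1) * m)" using assms(2,3) by linarith+
  then have "int j \<le> int ir + X" "int ir \<le> int j + X" unfolding e1 by simp_all
  then show ?thesis unfolding e2 by auto
qed

theorem mainTheorem5:
  fixes p d :: nat and i :: "nat \<Rightarrow> nat" and eps :: "nat \<Rightarrow> int"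
  assumes "p \<ge> 2"
    and "in_W0 p d i eps"
  shows "even d \<and>
    (\<forall>v. NF_tracked p (tracked_word d i eps) v \<longrightarrow>
      (\<exists>j :: nat \<Rightarrow> nat.
          strip v = map (\<lambda>l. (j l, 1)) [1..<d div 2 + 1]
                    @ rev (map (\<lambda>l. (j l, -1)) [1..<d div 2 + 1])
        \<and> (\<forall>l\<in>{1..<d div 2}. j l + p - 1 \<ge> j (l + 1))
        \<and> (\<forall>l\<in>{1..d div 2}.
              - (int d * (int p - 1)) \<le> 2 * (int (j l) - int (i (tau_inv v l)))
            \<and> 2 * (int (j l) - int (i (tau_inv v l))) \<le> int d * (int p - 1)))
      \<and> (\<forall>k\<in>{1..d div 2}.
            \<bar>int (i (tau_inv v k)) - int (i (tau_inv v (d - k + 1)))\<bar> \<le> int d * (int p - 1)))"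
proof -
  have p: "p \<ge> 2" using assms(1) .
  have eps: "\<forall>l\<in>{1..d}. eps l \<in> {1, -1}" and fpw: "fp_equiv p (word d i eps) []"
    using assms(2) unfolding in_W0_def by auto
  have evd: "even d"
  proof -
    have "es (word d i eps) = 0" using fp_es[OF fpw] by (simp add: es_def)
    then have s0: "sum_list (map eps [1..<d+1]) = 0" by (simp add: es_def word_def o_def)
    have "\<forall>x\<in>set (map eps [1..<d+1]). x \<in> {1, -1}" using eps by auto
    then have "even (length (map eps [1..<d+1]))" using sum_even s0 by (metis even_zero)
    moreover have "length (map eps [1..<d+1]) = d" by (simp only: length_map length_upt diff_add_inverse2)
    ultimately show ?thesis by simp
  qed
  define w0 where "w0 = tracked_word d i eps"
  have strip0: "strip w0 = word d i eps" by (simp add: w0_def strip_def tracked_word_def word_def)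
  have id0: "\<forall>s\<in>VV p. act p (strip w0) s = s" using fp_act[OF p fpw] strip0 by simp
  have sg0: "\<forall>z\<in>set w0. sg z \<in> {1, -1}" using eps by (auto simp: w0_def tracked_word_def)
  have len0: "length w0 = d" by (simp add: w0_def tracked_word_def)
  have main: "\<forall>v. NF_tracked p w0 v \<longrightarrow>
      (\<exists>j :: nat \<Rightarrow> nat.
          strip v = map (\<lambda>l. (j l, 1)) [1..<d div 2 + 1]
                    @ rev (map (\<lambda>l. (j l, -1)) [1..<d div 2 + 1])
        \<and> (\<forall>l\<in>{1..<d div 2}. j l + p - 1 \<ge> j (l + 1))
        \<and> (\<forall>l\<in>{1..d div 2}.
              - (int d * (int p - 1)) \<le> 2 * (int (j l) - int (i (tau_inv v l)))
            \<and> 2 * (int (j l) - int (i (tau_inv v l))) \<le> int d * (int p - 1)))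
      \<and> (\<forall>k\<in>{1..d div 2}.
            \<bar>int (i (tau_inv v k)) - int (i (tau_inv v (d - k + 1)))\<bar> \<le> int d * (int p - 1))"
  proof (intro allI impI)
    fix v assume "NF_tracked p w0 v"
    then obtain u where ru: "(rs_step p)\<^sup>*\<^sup>* w0 u" "rs_irreducible p u" "(ra_step p)\<^sup>*\<^sup>* u v" "ra_irreducible p v"
      unfolding NF_tracked_def by blast
    have INV0: "INV p i w0" unfolding w0_def by (rule INV_init)
    have RS: "INV p i u \<and> (\<forall>z\<in>set u. sg z \<in> {1, -1}) \<and> length u = length w0
      \<and> (\<forall>s\<in>VV p. act p (strip u) s = act p (strip w0) s)" using rs_many[OF p ru(1) INV0 sg0] .
    obtain k l where kl: "map sg u = replicate k 1 @ replicate l (-1)" using irr_sorted[OF ru(2)] RS by blast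
    have RA: "(sw p)\<^sup>*\<^sup>* (posL u) (posL v) \<and> (sw p)\<^sup>*\<^sup>* (rev (negL u)) (rev (negL v)) \<and> map sg v = map sg u
      \<and> (\<forall>s\<in>VV p. act p (strip v) s = act p (strip u) s)" using ra_many[OF p ru(3)] .
    have klv: "map sg v = replicate k 1 @ replicate l (-1)" using RA kl by simp
    have vsplit: "v = embP (posL v) @ embN (negL v)" using sorted_split[OF klv] .
    define P where "P = map fst (posL v)"
    define Q where "Q = rev (map fst (negL v))"
    have rP: "raNF p P" "raNF p Q" using irr_NF[OF p ru(4) klv] unfolding P_def Q_def by simp_all
    have "strip (embP (posL v) @ embN (negL v)) = map (\<lambda>c. (c, 1)) P @ map (\<lambda>c. (c, -1)) (rev Q)"
      unfolding P_def Q_def by (simp add: strip_def embP_def embN_def)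
    then have stripv: "strip v = map (\<lambda>c. (c, 1)) P @ map (\<lambda>c. (c, -1)) (rev Q)" using vsplit by simp
    have idv: "\<forall>s\<in>VV p. actN p (rev Q) (actP p P s) = s"
    proof
      fix s assume s: "s \<in> VV p"
      have "act p (strip v) s = s" using RA RS id0 s by simp
      then show "actN p (rev Q) (actP p P s) = s" unfolding stripv by (simp add: act_append act_pos act_neg)
    qed
    have eqPQ: "\<forall>s\<in>VV p. actP p P s = actP p Q s"
    proof
      fix s assume s: "s \<in> VV p"
      define t where "t = actP p P s"
      have t: "t \<in> VV p" unfolding t_def using actP_VV[OF p s] .
      have "actP p Q s = actP p Q (actN p (rev Q) t)" using idv s unfolding t_def by simp
      also have "\<dots> = t" using inv2[OF p t] .
      finally show "actP p P s = actP p Q s" unfolding t_def by simp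
    qed
    have PQ: "P = Q" using INJ[OF p rP eqPQ] .
    define m where "m = length P"
    have lenP: "length (posL v) = m" unfolding m_def P_def by simp
    have lenN: "length (negL v) = m" using PQ unfolding m_def Q_def by simp
    have "length v = length u" using RA by (metis length_map)
    then have lenv: "length v = d" using RS len0 by simp
    have "length v = m + m" using vsplit lenP lenN by (metis length_append length_map embP_def embN_def)
    then have dm: "d = 2 * m" "d div 2 = m" using lenv by auto
    define j where "j = (\<lambda>l. P ! (l - 1))"
    have lenPu: "length (posL u) = m" using sws_props[of p "posL u" "posL v"] RA lenP by simp
    have lenNu: "length (negL u) = m" using sws_props[of p "rev (negL u)" "rev (negL v)"] RA lenN by simp
    have bP: "\<forall>z\<in>set (posL u). i (snd z) \<le> fst z \<and> fst z \<le> i (snd z) + (p-1) * m"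
    proof
      fix z assume "z \<in> set (posL u)"
      then obtain w where w: "w \<in> set u" "sg w = 1" "z = (fst w, og w)" unfolding posL_def by auto
      show "i (snd z) \<le> fst z \<and> fst z \<le> i (snd z) + (p-1) * m" using RSB[of p i u w] RS w lenNu by simp
    qed
    have bN: "\<forall>z\<in>set (rev (negL u)). i (snd z) \<le> fst z \<and> fst z \<le> i (snd z) + (p-1) * m"
    proof
      fix z assume "z \<in> set (rev (negL u))"
      then obtain w where w: "w \<in> set u" "sg w = -1" "z = (fst w, og w)" unfolding negL_def by auto
      show "i (snd z) \<le> fst z \<and> fst z \<le> i (snd z) + (p-1) * m" using RSB[of p i u w] RS w lenPu by simp
    qed
    have posnth: "tau_inv v l = snd (posL v ! (l - 1)) \<and> j l = fst (posL v ! (l - 1)) \<and> posL v ! (l - 1) \<in> set (posL v)"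
      if "l \<in> {1..m}" for l
    proof -
      have lt: "l - 1 < length (posL v)" using that lenP by auto
      have "v ! (l - 1) = embP (posL v) ! (l - 1)" using lt vsplit by (metis nth_append length_map embP_def)
      then have "v ! (l - 1) = (fst (posL v ! (l - 1)), 1, snd (posL v ! (l - 1)))" using lt by (simp add: embP_def)
      then show ?thesis using lt unfolding tau_inv_def j_def P_def by simp
    qed
    have negnth: "tau_inv v (d - k + 1) = snd (negL v ! (m - k)) \<and> j k = fst (negL v ! (m - k)) \<and> negL v ! (m - k) \<in> set (rev (negL v))"
      if "k \<in> {1..m}" for k
    proof -
      have lt: "m - k < length (negL v)" using that lenN by auto
      have e: "d - k + 1 - 1 = length (embP (posL v)) + (m - k)" using that dm lenP by (simp add: embP_def)
      have "v ! (d - k + 1 - 1) = embN (negL v) ! (m - k)" using vsplit e by (metis nth_append_length_plus)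
      then have vn: "v ! (d - k + 1 - 1) = (fst (negL v ! (m - k)), -1, snd (negL v ! (m - k)))" using lt by (simp add: embN_def)
      have "fst (negL v ! (m - k)) = (rev Q) ! (m - k)" unfolding Q_def using lt by simp
      also have "\<dots> = P ! (k - 1)"
      proof -
        have k: "1 \<le> k" "k \<le> length Q" using that m_def PQ by auto
        then have "length Q - k < length Q" by simp
        then have "rev Q ! (length Q - k) = Q ! (length Q - Suc (length Q - k))" by (rule rev_nth)
        moreover have "length Q - Suc (length Q - k) = k - 1" using k by simp
        ultimately show ?thesis using PQ m_def by simp
      qed
      finally have "j k = fst (negL v ! (m - k))" unfolding j_def by simp
      then show ?thesis using vn lt unfolding tau_inv_def by simp
    qed
    have bound_pos: "j l \<le> i (tau_inv v l) + (p-1) * m \<and> i (tau_inv v l) \<le> j l + (p-1) * m" if "l \<in> {1..m}" for l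
      using elem_bound[of p "posL u" "posL v" _ m i] RA lenP bP posnth[OF that] by auto
    have bound_neg: "j k \<le> i (tau_inv v (d - k + 1)) + (p-1) * m \<and> i (tau_inv v (d - k + 1)) \<le> j k + (p-1) * m" if "k \<in> {1..m}" for k
      using elem_bound[of p "rev (negL u)" "rev (negL v)" _ m i] RA lenN bN negnth[OF that] by auto
    have hA: "strip v = map (\<lambda>l. (j l, 1)) [1..<d div 2 + 1] @ rev (map (\<lambda>l. (j l, -1)) [1..<d div 2 + 1])"
    proof -
      have mp: "map j [1..<m + 1] = P" unfolding j_def m_def by (rule map_nth_upt)
      have "map (\<lambda>l. (j l, 1::int)) [1..<m + 1] = map (\<lambda>c. (c, 1)) (map j [1..<m + 1])" by simp
      moreover have "map (\<lambda>l. (j l, -1::int)) [1..<m + 1] = map (\<lambda>c. (c, -1)) (map j [1..<m + 1])" by simp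
      ultimately have "map (\<lambda>l. (j l, 1::int)) [1..<m + 1] = map (\<lambda>c. (c, 1)) P"
        "map (\<lambda>l. (j l, -1::int)) [1..<m + 1] = map (\<lambda>c. (c, -1)) P" unfolding mp by simp_all
      then show ?thesis unfolding stripv dm(2) using PQ by (simp add: rev_map)
    qed
    have hB: "\<forall>l\<in>{1..<d div 2}. j l + p - 1 \<ge> j (l + 1)"
    proof
      fix l assume l: "l \<in> {1..<d div 2}"
      then have lt: "Suc (l - 1) < length P" using dm m_def by auto
      have ch: "\<forall>xs a b ys. P = xs @ [a, b] @ ys \<longrightarrow> b \<le> a + (p-1)" using rP(1) unfolding raNF_char .
      have "P ! Suc (l - 1) \<le> P ! (l - 1) + (p-1)" using ch[rule_format, OF two_split[OF lt]] .
      then show "j l + p - 1 \<ge> j (l + 1)" unfolding j_def using l p by auto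
    qed
    have hC: "\<forall>l\<in>{1..d div 2}.
              - (int d * (int p - 1)) \<le> 2 * (int (j l) - int (i (tau_inv v l)))
            \<and> 2 * (int (j l) - int (i (tau_inv v l))) \<le> int d * (int p - 1)"
    proof
      fix l assume l: "l \<in> {1..d div 2}"
      then have l': "l \<in> {1..m}" using dm by simp
      show "- (int d * (int p - 1)) \<le> 2 * (int (j l) - int (i (tau_inv v l)))
            \<and> 2 * (int (j l) - int (i (tau_inv v l))) \<le> int d * (int p - 1)"
        using int_bounds[OF dm(1) conjunct1[OF bound_pos[OF l']] conjunct2[OF bound_pos[OF l']] p] .
    qed
    have hD: "\<forall>k\<in>{1..d div 2}.
            \<bar>int (i (tau_inv v k)) - int (i (tau_inv v (d - k + 1)))\<bar> \<le> int d * (int p - 1)"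
    proof
      fix k assume k: "k \<in> {1..d div 2}"
      then have k': "k \<in> {1..m}" using dm by simp
      have a1: "- (int d * (int p - 1)) \<le> 2 * (int (j k) - int (i (tau_inv v k))) \<and> 2 * (int (j k) - int (i (tau_inv v k))) \<le> int d * (int p - 1)"
        using int_bounds[OF dm(1) conjunct1[OF bound_pos[OF k']] conjunct2[OF bound_pos[OF k']] p] .
      have a2: "- (int d * (int p - 1)) \<le> 2 * (int (j k) - int (i (tau_inv v (d - k + 1)))) \<and> 2 * (int (j k) - int (i (tau_inv v (d - k + 1)))) \<le> int d * (int p - 1)"
        using int_bounds[OF dm(1) conjunct1[OF bound_neg[OF k']] conjunct2[OF bound_neg[OF k']] p] .
      show "\<bar>int (i (tau_inv v k)) - int (i (tau_inv v (d - k + 1)))\<bar> \<le> int d * (int p - 1)"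
      proof -
        define Y where "Y = int d * (int p - 1)"
        define A where "A = int (i (tau_inv v k))"
        define B where "B = int (i (tau_inv v (d - k + 1)))"
        define J where "J = int (j k)"
        have "- Y \<le> 2 * (J - A)" "2 * (J - A) \<le> Y" "- Y \<le> 2 * (J - B)" "2 * (J - B) \<le> Y"
          using a1 a2 unfolding Y_def A_def B_def J_def by auto
        then have "\<bar>A - B\<bar> \<le> Y" by (simp add: abs_le_iff)
        then show ?thesis unfolding Y_def A_def B_def .
      qed
    qed
    show "(\<exists>j :: nat \<Rightarrow> nat.
          strip v = map (\<lambda>l. (j l, 1)) [1..<d div 2 + 1]
                    @ rev (map (\<lambda>l. (j l, -1)) [1..<d div 2 + 1])
        \<and> (\<forall>l\<in>{1..<d div 2}. j l + p - 1 \<ge> j (l + 1))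
        \<and> (\<forall>l\<in>{1..d div 2}.
              - (int d * (int p - 1)) \<le> 2 * (int (j l) - int (i (tau_inv v l)))
            \<and> 2 * (int (j l) - int (i (tau_inv v l))) \<le> int d * (int p - 1)))
      \<and> (\<forall>k\<in>{1..d div 2}.
            \<bar>int (i (tau_inv v k)) - int (i (tau_inv v (d - k + 1)))\<bar> \<le> int d * (int p - 1))"
    proof (rule conjI)
      show "\<forall>k\<in>{1..d div 2}.
            \<bar>int (i (tau_inv v k)) - int (i (tau_inv v (d - k + 1)))\<bar> \<le> int d * (int p - 1)" using hD .
    qed (rule exI[of _ j], intro conjI, rule hA, rule hB, rule hC)
  qed
  show ?thesis using evd main unfolding w0_def by blast
qed


end
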